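(* For each of the following four pairs $T=(T_1,T_2)$: (i) $T_1=\begin{pmatrix}1&0\\1&0\end{pmatrix}$, $T_2=\begin{pmatrix}1&1\\1&0\end{pmatrix}$; (ii) $T_1=\begin{pmatrix}1&0\\1&0\end{pmatrix}$, $T_2=\begin{pmatrix}1&1\\0&1\end{pmatrix}$; (iii) $T_1=\begin{pmatrix}1&0\\1&0\end{pmatrix}$, $T_2=\begin{pmatrix}1&1\\1&1\end{pmatrix}$; (iv) $T_1=\begin{pmatrix}1&0\\0&1\end{pmatrix}$, $T_2=\begin{pmatrix}1&1\\1&1\end{pmatrix}$, one has $h(T)=\frac{1}{\lambda^2}\ln 2$, where $\lambda=\frac{1+\sqrt5}{2}$.
   Context: Define $\gamma^{[s_j]}_{i,n}$ ($i,j\in\{1,2\}$, $n\ge0$) by $\gamma^{[s_j]}_{i,0}=1$ and for $n\ge1$ $$\gamma^{[s_1]}_{i,n}=\sum_{j,k=1}^2T_1(i,j)T_2(i,k)\,\gamma^{[s_1]}_{j,n-1}\gamma^{[s_2]}_{k,n-1},\qquad \gamma^{[s_2]}_{i,n}=\sum_{j=1}^2T_1(i,j)\,\gamma^{[s_1]}_{j,n-1}.$$ Let $l_0=1$, $l_1=2$, $l_{k+1}=l_k+l_{k-1}$, $|E_n|=\sum_{k=0}^nl_k$ (the number of elements of word length $\le n$ in the monoid $G=\langle s_1,s_2\mid s_2s_2=s_2\rangle$), and $h(T)=\limsup_{n\to\infty}\frac{\ln(\gamma^{[s_1]}_{1,n}+\gamma^{[s_1]}_{2,n})}{|E_n|}$,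 the paper's entropy of the $G$-vertex shift with adjacency matrices $T=(T_1,T_2)$ over $\{1,2\}$. *)

theory Defs
  imports Complex_Main "HOL-Library.Extended_Real"
begin

text \<open>2x2 matrices over the alphabet {1,2}, represented as functions on indices 1 and 2.\<close>
definition mat2 :: "nat \<Rightarrow> nat \<Rightarrow> nat \<Rightarrow> nat \<Rightarrow> (nat \<Rightarrow> nat \<Rightarrow> nat)" where
  "mat2 a b c d = (\<lambda>i j. if i = 1 then (if j = 1 then a else b) else (if j = 1 then c else d))"

text \<open>gamma T1 T2 n = (gamma^[s1]_{.,n}, gamma^[s2]_{.,n}).\<close>
fun gamma :: "(nat \<Rightarrow> nat \<Rightarrow> nat) \<Rightarrow> (nat \<Rightarrow> nat \<Rightarrow> nat) \<Rightarrow> nat \<Rightarrow> (nat \<Rightarrow> nat) \<times> (nat \<Rightarrow> nat)" where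
  "gamma T1 T2 0 = ((\<lambda>i. 1), (\<lambda>i. 1))"
| "gamma T1 T2 (Suc n) =
     (let g1 = fst (gamma T1 T2 n); g2 = snd (gamma T1 T2 n) in
      ((\<lambda>i. \<Sum>j\<in>{1,2}. \<Sum>k\<in>{1,2}. T1 i j * T2 i k * g1 j * g2 k),
       (\<lambda>i. \<Sum>j\<in>{1,2}. T1 i j * g1 j)))"

fun lseq :: "nat \<Rightarrow> nat" where
  "lseq 0 = 1"
| "lseq (Suc 0) = 2"
| "lseq (Suc (Suc k)) = lseq (Suc k) + lseq k"

definition Ecard :: "nat \<Rightarrow> nat" where
  "Ecard n = (\<Sum>k\<le>n. lseq k)"

definition entropy :: "(nat \<Rightarrow> nat \<Rightarrow> nat) \<Rightarrow> (nat \<Rightarrow> nat \<Rightarrow> nat) \<Rightarrow> ereal" where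
  "entropy T1 T2 = limsup (\<lambda>n. ereal (ln (real (fst (gamma T1 T2 n) 1 + fst (gamma T1 T2 n) 2)) / real (Ecard n)))"

end

theory Submission imports Defs begin

fun ab :: "nat \<Rightarrow> nat \<times> nat" where
  "ab 0 = (1,1)"
| "ab (Suc n) = (2 * fst (ab n) * snd (ab n), fst (ab n))"

definition A where "A n = fst (ab n)"
definition B where "B n = snd (ab n)"

lemma sum12: "(\<Sum>j\<in>{1::nat,2}. f j) = f 1 + (f 2 :: nat)" by simp

lemma g_i: "gamma (mat2 1 0 1 0) (mat2 1 1 1 0) n =
  ((\<lambda>i. if i = 1 then A n else (if n = 0 then 1 else A (n-1) * B (n-1))), (\<lambda>i. B n))"
  by (induction n) (auto simp: A_def B_def mat2_def Let_def sum12 fun_eq_iff)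
lemma g_ii: "gamma (mat2 1 0 1 0) (mat2 1 1 0 1) n =
  ((\<lambda>i. if i = 1 then A n else (if n = 0 then 1 else A (n-1) * B (n-1))), (\<lambda>i. B n))"
  by (induction n) (auto simp: A_def B_def mat2_def Let_def sum12 fun_eq_iff)
lemma g_iii: "gamma (mat2 1 0 1 0) (mat2 1 1 1 1) n = ((\<lambda>i. A n), (\<lambda>i. B n))"
  by (induction n) (auto simp: A_def B_def mat2_def Let_def sum12 fun_eq_iff)
lemma g_iv: "gamma (mat2 1 0 0 1) (mat2 1 1 1 1) n = ((\<lambda>i. A n), (\<lambda>i. B n))"
  by (induction n) (auto simp: A_def B_def mat2_def Let_def sum12 fun_eq_iff)

lemma lseq_pos: "lseq n \<ge> 1"
  by (induction n rule: lseq.induct) auto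

lemma AB: "A n = 2 ^ (lseq n - 1) \<and> B (Suc n) = A n"
proof (induction n rule: nat_less_induct)
  case (1 n)
  show ?case
  proof (cases n)
    case 0 then show ?thesis by (simp add: A_def B_def)
  next
    case (Suc m)
    note ih = 1[rule_format, of m]
    show ?thesis
    proof (cases m)
      case 0 then show ?thesis using Suc by (simp add: A_def B_def numeral_eq_Suc)
    next
      case (Suc k)
      have "A n = 2 * A m * B m" using \<open>n = Suc m\<close> by (simp add: A_def B_def)
      also have "B m = A k" using 1[rule_format, of k] Suc \<open>n = Suc m\<close> by simp
      also have "2 * A m * A k = 2 * 2^(lseq m - 1) * 2^(lseq k - 1)"
        using 1[rule_format, of k] 1[rule_format, of m] Suc \<open>n = Suc m\<close> by simp
      also have "\<dots> = 2 ^ (lseq n - 1)"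
        using lseq_pos[of m] lseq_pos[of k] Suc \<open>n = Suc m\<close>
        by (simp flip: power_add power_Suc)
      finally show ?thesis using \<open>n = Suc m\<close> by (simp add: A_def B_def)
    qed
  qed
qed

lemma Ecard_eq: "Ecard n + 2 = lseq (Suc (Suc n))"
  by (induction n) (auto simp: Ecard_def)


definition phi :: real where "phi = (1 + sqrt 5) / 2"
definition psi :: real where "psi = (1 - sqrt 5) / 2"

lemma lam_sq: "phi^2 = phi + 1"
  by (simp add: phi_def power2_eq_square field_simps)
lemma psi_sq: "psi^2 = psi + 1"
  by (simp add: psi_def power2_eq_square field_simps)
lemma lam_gt1: "phi > 1"
proof -
  have "sqrt 5 > 1" by simp
  then show ?thesis by (simp add: phi_def)
qed
lemma psi_abs: "\<bar>psi\<bar> < 1"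
proof -
  have "sqrt 5 > 1" by simp
  moreover have "sqrt 5 < 3" by (rule real_less_lsqrt) auto
  ultimately show ?thesis by (simp add: psi_def)
qed

lemma binet: "real (lseq n) * sqrt 5 = phi^(n+2) - psi^(n+2)"
proof (induction n rule: lseq.induct)
  case 1
  have d: "phi - psi = sqrt 5" by (simp add: phi_def psi_def field_simps)
  have "phi^2 - psi^2 = sqrt 5" using d by (simp add: lam_sq psi_sq)
  then show ?case by (simp add: power2_eq_square)
next
  case 2
  have "phi^3 - psi^3 = 2 * sqrt 5"
  proof -
    have "phi^3 = phi * phi^2" "psi^3 = psi * psi^2" by (simp_all add: power_numeral_reduce)
    moreover have d: "phi - psi = sqrt 5" by (simp add: phi_def psi_def field_simps)
    moreover have "phi * phi^2 = 2*phi+1" "psi*psi^2 = 2*psi+1" using lam_sq psi_sq by (simp_all add: power2_eq_square algebra_simps)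
    ultimately show ?thesis by simp
  qed
  then show ?case by (simp add: power3_eq_cube mult.assoc)
next
  case (3 k)
  have fibx: "x^(Suc (Suc k) + 2) = x^(Suc k + 2) + x^(k+2)" if "x^2 = x + 1" for x :: real
  proof -
    have "x^(Suc (Suc k) + 2) = x^(k+2) * x^2" by (simp add: power2_eq_square)
    also have "\<dots> = x^(k+2) * x + x^(k+2)" using that by (simp add: algebra_simps)
    also have "x^(k+2) * x = x^(Suc k + 2)" by simp
    finally show ?thesis .
  qed
  have "phi^(Suc (Suc k) + 2) = phi^(Suc k + 2) + phi^(k+2)" by (rule fibx[OF lam_sq])
  moreover have "psi^(Suc (Suc k) + 2) = psi^(Suc k + 2) + psi^(k+2)" by (rule fibx[OF psi_sq])
  ultimately show ?case using 3 by (simp add: algebra_simps)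
qed

lemma divX: "(X::real) > 0 \<Longrightarrow> (X - Y) / (a * X - b * Y - c) = (1 - Y/X) / (a - b * (Y/X) - c * (1/X))"
proof -
  assume X: "X > 0"
  have "(X - Y) / (a * X - b * Y - c) = ((X - Y)/X) / ((a * X - b * Y - c)/X)" using X by simp
  also have "(X - Y)/X = 1 - Y/X" using X by (simp add: field_simps)
  also have "(a * X - b * Y - c)/X = a - b * (Y/X) - c * (1/X)" using X by (simp add: field_simps)
  finally show ?thesis .
qed

lemma ratio_lim: "(\<lambda>n. real (lseq n) / real (Ecard n)) \<longlonglongrightarrow> 1 / phi^2"
proof -
  define q where "q = psi / phi"
  define r where "r = 1 / phi"
  have lp: "phi > 0" using lam_gt1 by simp
  have q0: "(\<lambda>n. q^(n+2)) \<longlonglongrightarrow> 0"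
  proof -
    have "\<bar>q\<bar> < 1" using psi_abs lam_gt1 by (simp add: q_def abs_div)
    then have "(\<lambda>n. q^n) \<longlonglongrightarrow> 0" by (simp add: LIMSEQ_power_zero)
    then show ?thesis by (rule LIMSEQ_ignore_initial_segment)
  qed
  have r0: "(\<lambda>n. r^(n+2)) \<longlonglongrightarrow> 0"
  proof -
    have "\<bar>r\<bar> < 1" using lam_gt1 by (simp add: r_def)
    then have "(\<lambda>n. r^n) \<longlonglongrightarrow> 0" by (simp add: LIMSEQ_power_zero)
    then show ?thesis by (rule LIMSEQ_ignore_initial_segment)
  qed
  have lim: "(\<lambda>n. (1 - q^(n+2)) / (phi^2 - psi^2 * q^(n+2) - 2 * sqrt 5 * r^(n+2)))
      \<longlonglongrightarrow> (1 - 0) / (phi^2 - psi^2 * 0 - 2 * sqrt 5 * 0)"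
    using lp by (intro tendsto_intros q0 r0) auto
  have eq: "real (lseq n) / real (Ecard n) =
     (1 - q^(n+2)) / (phi^2 - psi^2 * q^(n+2) - 2 * sqrt 5 * r^(n+2))" for n
  proof -
    have E: "real (Ecard n) * sqrt 5 = phi^(n+4) - psi^(n+4) - 2 * sqrt 5"
    proof -
      have "real (Ecard n) = real (lseq (n+2)) - 2" using Ecard_eq[of n]
        by (metis Suc_eq_plus1 add_2_eq_Suc' add_diff_cancel_right' of_nat_add of_nat_numeral)
      then have "real (Ecard n) * sqrt 5 = real (lseq (n+2)) * sqrt 5 - 2 * sqrt 5"
        by (simp add: left_diff_distrib)
      moreover have "phi^(n+4) = phi^(n+2+2)" "psi^(n+4) = psi^(n+2+2)"
        by (rule arg_cong[where f="\<lambda>k. phi^k"], simp) (rule arg_cong[where f="\<lambda>k. psi^k"], simp)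
      ultimately show ?thesis using binet[of "n+2"] by simp
    qed
    have L: "real (lseq n) * sqrt 5 = phi^(n+2) - psi^(n+2)" by (rule binet)
    have x: "phi^(n+2) > 0" using lp by simp
    have qq: "q^(n+2) = psi^(n+2) / phi^(n+2)" by (simp add: q_def power_divide)
    have rr: "r^(n+2) = 1 / phi^(n+2)" by (simp add: r_def power_divide)
    have n4: "n+4 = 2+(n+2)" by simp
    have l4: "phi^(n+4) = phi^2 * phi^(n+2)" "psi^(n+4) = psi^2 * psi^(n+2)"
      by (simp_all only: n4 power_add)
    have "real (lseq n) / real (Ecard n) = (real (lseq n) * sqrt 5) / (real (Ecard n) * sqrt 5)"
      by simp
    also have "\<dots> = (phi^(n+2) - psi^(n+2)) / (phi^2 * phi^(n+2) - psi^2 * psi^(n+2) - 2 * sqrt 5)"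
      using L E l4 by simp
    also have "\<dots> = (1 - q^(n+2)) / (phi^2 - psi^2 * q^(n+2) - 2 * sqrt 5 * r^(n+2))"
      unfolding qq rr using x by (rule divX)
    finally show ?thesis .
  qed
  show ?thesis using lim eq by (simp add: lam_sq)
qed

lemma Ecard_ge: "Ecard n \<ge> Suc n"
proof (induction n)
  case 0 then show ?case by (simp add: Ecard_def)
next
  case (Suc n)
  have "Ecard (Suc n) = Ecard n + lseq (Suc n)" by (simp add: Ecard_def)
  then show ?case using Suc lseq_pos[of "Suc n"] by simp
qed

lemma invE: "(\<lambda>n. 1 / real (Ecard n)) \<longlonglongrightarrow> 0"
proof -
  have "filterlim (\<lambda>n. real (Ecard n)) at_top sequentially"
    by (rule filterlim_at_top_mono[OF filterlim_real_sequentially])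
       (intro always_eventually allI, metis Ecard_ge Suc_leD of_nat_le_iff)
  then have "(\<lambda>n. inverse (real (Ecard n))) \<longlonglongrightarrow> 0" by (rule tendsto_inverse_0_at_top)
  then show ?thesis by (simp add: inverse_eq_divide)
qed

lemma main:
  fixes S :: "nat \<Rightarrow> nat"
  assumes lo: "\<And>n. A n \<le> S n" and hi: "\<And>n. S n \<le> 2 * A n"
  shows "limsup (\<lambda>n. ereal (ln (real (S n)) / real (Ecard n))) = ereal (ln 2 / phi^2)"
proof -
  have lnA: "ln (real (A n)) = (real (lseq n) - 1) * ln 2" for n
  proof -
    have "real (A n) = 2 ^ (lseq n - 1)" using AB[of n] by simp
    then have "ln (real (A n)) = real (lseq n - 1) * ln 2" by (simp add: ln_realpow)
    then show ?thesis using lseq_pos[of n] by (simp add: of_nat_diff)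
  qed
  have Apos: "real (A n) > 0" for n using AB[of n] by simp
  have Epos: "real (Ecard n) > 0" for n using Ecard_ge[of n] by simp
  have l: "ln 2 * (real (lseq n) / real (Ecard n)) - ln 2 * (1 / real (Ecard n))
      \<le> ln (real (S n)) / real (Ecard n)" for n
  proof -
    have "ln (real (A n)) \<le> ln (real (S n))" using lo[of n] Apos[of n] by simp
    then have "(real (lseq n) - 1) * ln 2 / real (Ecard n) \<le> ln (real (S n)) / real (Ecard n)"
      using Epos[of n] lnA[of n] by (simp add: divide_right_mono)
    moreover have "(real (lseq n) - 1) * ln 2 / real (Ecard n) = ln 2 * (real (lseq n) / real (Ecard n)) - ln 2 * (1 / real (Ecard n))"
      using Epos[of n] by (simp add: field_simps)
    ultimately show ?thesis by simp
  qed
  have u: "ln (real (S n)) / real (Ecard n) \<le> ln 2 * (real (lseq n) / real (Ecard n))" for n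
  proof -
    have "real (S n) \<le> 2 * real (A n)" using hi[of n] by (metis of_nat_le_iff of_nat_mult of_nat_numeral)
    moreover have "real (S n) > 0" using lo[of n] Apos[of n] by simp
    ultimately have "ln (real (S n)) \<le> ln (2 * real (A n))" by simp
    also have "\<dots> = ln 2 + ln (real (A n))" using Apos[of n] by (simp add: ln_mult)
    also have "\<dots> = real (lseq n) * ln 2" using lnA[of n] by (simp add: algebra_simps)
    finally show ?thesis using Epos[of n] by (simp add: divide_right_mono field_simps)
  qed
  have t1: "(\<lambda>n. ln 2 * (real (lseq n) / real (Ecard n)) - ln 2 * (1 / real (Ecard n))) \<longlonglongrightarrow> ln 2 * (1/phi^2) - ln 2 * 0"
    by (intro tendsto_intros ratio_lim invE)
  have t2: "(\<lambda>n. ln 2 * (real (lseq n) / real (Ecard n))) \<longlonglongrightarrow> ln 2 * (1/phi^2)"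
    by (intro tendsto_intros ratio_lim)
  have "(\<lambda>n. ln (real (S n)) / real (Ecard n)) \<longlonglongrightarrow> ln 2 / phi^2"
    by (rule real_tendsto_sandwich[OF always_eventually always_eventually, OF allI allI, OF l u])
       (use t1 t2 in simp_all)
  then show ?thesis by (intro lim_imp_Limsup) auto
qed

lemma A_Suc: "A (Suc n) = 2 * A n * B n" by (simp add: A_def B_def)

lemma bounds_12:
  "A n \<le> A n + (if n = 0 then 1 else A (n-1) * B (n-1)) \<and>
   A n + (if n = 0 then 1 else A (n-1) * B (n-1)) \<le> 2 * A n"
proof (cases n)
  case 0 then show ?thesis by (simp add: A_def)
next
  case (Suc m) then show ?thesis using A_Suc[of m] by simp
qed

theorem corollary1:
  fixes lam :: real
  defines "lam \<equiv> (1 + sqrt 5) / 2"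
  shows "entropy (mat2 1 0 1 0) (mat2 1 1 1 0) = ereal (ln 2 / lam^2)
       \<and> entropy (mat2 1 0 1 0) (mat2 1 1 0 1) = ereal (ln 2 / lam^2)
       \<and> entropy (mat2 1 0 1 0) (mat2 1 1 1 1) = ereal (ln 2 / lam^2)
       \<and> entropy (mat2 1 0 0 1) (mat2 1 1 1 1) = ereal (ln 2 / lam^2)"
proof -
  have L: "lam = phi" by (simp add: lam_def phi_def)
  have 1: "entropy (mat2 1 0 1 0) (mat2 1 1 1 0) = ereal (ln 2 / phi^2)"
    unfolding entropy_def g_i using main[of "\<lambda>n. A n + (if n = 0 then 1 else A (n-1) * B (n-1))"] bounds_12 by simp
  have 2: "entropy (mat2 1 0 1 0) (mat2 1 1 0 1) = ereal (ln 2 / phi^2)"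
    unfolding entropy_def g_ii using main[of "\<lambda>n. A n + (if n = 0 then 1 else A (n-1) * B (n-1))"] bounds_12 by simp
  have 3: "entropy (mat2 1 0 1 0) (mat2 1 1 1 1) = ereal (ln 2 / phi^2)"
    unfolding entropy_def g_iii using main[of "\<lambda>n. A n + A n"] by simp
  have 4: "entropy (mat2 1 0 0 1) (mat2 1 1 1 1) = ereal (ln 2 / phi^2)"
    unfolding entropy_def g_iv using main[of "\<lambda>n. A n + A n"] by simp
  show ?thesis using 1 2 3 4 L by simp
qed

end
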